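(* Take the special vertex $v=0$. Let $I,J$ be $m$-subsets of $\{1,\dots,n\}$ such that $J\setminus I=J'\sqcup J''$ with $J'<(I\setminus J)<J''$. Then $\kappa(M_I,M_J)=|J'|$ and $\kappa(M_J,M_I)=|J''|$.
   Context: Fix integers $1\le m<n$. Let $Q$ be the quiver with vertex set $\mathbb{Z}_n$ and arrows $x_a\colon a-1\to a$, $y_a\colon a\to a-1$ for $a\in\{1,\dots,n\}$. Let $A$ be the quotient of $\widehat{\mathbb{C}Q}$ by the relations $xy=yx$ and $x^m=y^{n-m}$ at every vertex; centre $Z=\mathbb{C}[[t]]$, $t=xy$; $e_j$ the idempotent at vertex $j$. $\operatorname{CM}(A)$ is the category of finitely generated $A$-modules free over $Z$. For an $m$-subset $I\subseteq\{1,\dots,n\}$, $M_I\in\operatorname{CM}(A)$ is the module with $e_jM_I=Z$ for all $j$, where $x_a$ acts by $1$ if $a\in I$ and by $t$ if $a\notin I$, and $y_a$ acts by $t$ if $a\in I$ and by $1$ if $a\notin I$. For $M,N\in\operatorname{CM}(A)$, $K_v(M,N)$ is the cokernel of the injective restriction map $\operatorname{Hom}_A(M,N)\to\operatorname{Hom}_Z(e_vM,e_vN)$ and $\kappa(M,N)=\dim_{\mathbb{C}}K_v(M,N)$. For sets $X,Y$ of integers, $X<Y$ means $x<y$ for all $x\in X,y\in Y$. *)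

theory Defs
  imports "HOL-Computational_Algebra.Formal_Power_Series"
begin

text \<open>The centre Z = C[[t]] is modelled by the type complex fps, with t = fps_X.
Vertices of the cyclic quiver are 0,...,n-1 (vertex n is identified with 0);
for a in {1..n} the arrow x_a goes from vertex a-1 to vertex (a mod n) and
y_a goes back.\<close>

definition tgt :: "nat \<Rightarrow> nat \<Rightarrow> nat" where
  "tgt n a = a mod n"

definition src :: "nat \<Rightarrow> nat \<Rightarrow> nat" where
  "src n a = a - 1"

text \<open>Action of x_a and y_a on the module M_I (each e_j M_I = Z): multiplication
by the following power series.\<close>

definition xact :: "nat set \<Rightarrow> nat \<Rightarrow> complex fps" where
  "xact I a = (if a \<in> I then 1 else fps_X)"

definition yact :: "nat set \<Rightarrow> nat \<Rightarrow> complex fps" where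
  "yact I a = (if a \<in> I then fps_X else 1)"

text \<open>Z-linear maps Z \<rightarrow> Z, i.e. Hom_Z(e_v M, e_v N) for rank-one vertex modules.\<close>

definition Zlin :: "(complex fps \<Rightarrow> complex fps) set" where
  "Zlin = {h. (\<forall>r s. h (r + s) = h r + h s) \<and> (\<forall>a r. h (a * r) = a * h r)}"

definition HomA :: "nat \<Rightarrow> nat set \<Rightarrow> nat set \<Rightarrow> (nat \<Rightarrow> complex fps \<Rightarrow> complex fps) set" where
  "HomA n I J = {h. (\<forall>j<n. h j \<in> Zlin) \<and>
     (\<forall>a\<in>{1..n}. \<forall>r.
        h (tgt n a) (xact I a * r) = xact J a * h (src n a) r \<and>
        h (src n a) (yact I a * r) = yact J a * h (tgt n a) r)}"

text \<open>Dimension over C of the quotient V/W of C-vector spaces of maps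
(scalar c acting by multiplication with fps_const c): the least size of a finite
subset of V spanning V modulo W.\<close>

definition coker_dim :: "('b \<Rightarrow> complex fps) set \<Rightarrow> ('b \<Rightarrow> complex fps) set \<Rightarrow> nat" where
  "coker_dim V W = (LEAST d. \<exists>B. B \<subseteq> V \<and> finite B \<and> card B = d \<and>
      (\<forall>h\<in>V. \<exists>w\<in>W. \<exists>c :: ('b \<Rightarrow> complex fps) \<Rightarrow> complex.
          h = (\<lambda>r. w r + (\<Sum>b\<in>B. fps_const (c b) * b r))))"

text \<open>kappa(M_I, M_J) at the special vertex v = 0: dimension of the cokernel of the
restriction Hom_A(M_I,M_J) \<rightarrow> Hom_Z(e_0 M_I, e_0 M_J), h \<mapsto> h 0.\<close>

definition kappa0 :: "nat \<Rightarrow> nat set \<Rightarrow> nat set \<Rightarrow> nat" where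
  "kappa0 n I J = coker_dim Zlin ((\<lambda>h. h 0) ` HomA n I J)"

end

theory Submission imports Defs begin
unbundle fps_syntax

interpretation fv: vector_space "\<lambda>(c::complex) (f::complex fps). fps_const c * f"
proof unfold_locales
  fix a b :: complex and x y :: "complex fps"
  show "fps_const a * (x + y) = fps_const a * x + fps_const a * y" by (rule distrib_left)
  show "fps_const (a + b) * x = fps_const a * x + fps_const b * x"
    by (metis distrib_right fps_const_add)
  show "fps_const a * (fps_const b * x) = fps_const (a * b) * x"
    by (metis mult.assoc fps_const_mult)
  show "fps_const 1 * x = x" by simp
qed

lemma Zlin_eq: assumes "h \<in> Zlin" shows "h r = r * h 1"
proof -
  have "h (r * 1) = r * h 1" using assms unfolding Zlin_def by blast
  then show ?thesis by simp
qed

lemma mult_Zlin: "(\<lambda>r. c * r) \<in> Zlin"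
  unfolding Zlin_def by (simp add: distrib_left mult.left_commute)

definition trunc :: "nat \<Rightarrow> complex fps \<Rightarrow> complex fps" where
  "trunc d f = Abs_fps (\<lambda>i. if i < d then f $ i else 0)"

lemma trunc_add: "trunc d (f + g) = trunc d f + trunc d g"
  by (simp add: trunc_def fps_eq_iff)
lemma trunc_scale: "trunc d (fps_const c * f) = fps_const c * trunc d f"
  by (simp add: trunc_def fps_eq_iff)
lemma trunc_sum: "finite B \<Longrightarrow> trunc d (\<Sum>b\<in>B. g b) = (\<Sum>b\<in>B. trunc d (g b))"
  by (induct B rule: finite_induct) (auto simp: trunc_add, simp add: trunc_def fps_eq_iff)
lemma trunc_dvd: "fps_X^d dvd f \<Longrightarrow> trunc d f = 0"
  by (auto simp: trunc_def fps_eq_iff fps_X_power_mult_nth)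
lemma trunc_X: "i < d \<Longrightarrow> trunc d (fps_X^i) = fps_X^i"
  by (auto simp: trunc_def fps_eq_iff)

lemma X_pow_inj: "fps_X^i = (fps_X^j :: complex fps) \<Longrightarrow> i = j"
  by (metis fps_X_power_nth one_neq_zero)

lemma indep_X: "fv.independent ((\<lambda>i. fps_X^i :: complex fps) ` S)"
  unfolding fv.independent_explicit_finite_subsets
proof (intro allI impI ballI)
  fix T u v assume T: "T \<subseteq> (\<lambda>i. fps_X^i) ` S" "finite T"
    and s: "(\<Sum>v\<in>T. fps_const (u v) * v) = (0::complex fps)" and v: "v \<in> T"
  then obtain i where vi: "v = fps_X^i" by auto
  have "0 = (\<Sum>w\<in>T. fps_const (u w) * w) $ i" using s by simp
  also have "\<dots> = (\<Sum>w\<in>T. u w * w $ i)" by (simp add: fps_sum_nth)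
  also have "\<dots> = (\<Sum>w\<in>{v}. u w * w $ i)"
  proof (rule sum.mono_neutral_right[OF T(2)])
    show "{v} \<subseteq> T" using v by auto
    show "\<forall>w\<in>T - {v}. u w * w $ i = 0"
    proof
      fix w assume w: "w \<in> T - {v}"
      then obtain j where "w = fps_X^j" using T by auto
      with w vi show "u w * w $ i = 0" by auto
    qed
  qed
  also have "\<dots> = u v" using vi by simp
  finally show "u v = 0" by simp
qed

lemma coker_dim_eq:
  assumes W1: "\<forall>w\<in>W. w \<in> Zlin \<and> fps_X^d dvd w 1"
  and W2: "\<forall>q. (\<lambda>r. fps_X^d * q * r) \<in> W"
  shows "coker_dim Zlin W = d"
  unfolding coker_dim_def
proof (rule Least_equality)
  define F where "F = (\<lambda>i::nat. \<lambda>r::complex fps. fps_X^i * r)"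
  have injF: "inj_on F {..<d}"
    by (rule inj_onI) (metis F_def X_pow_inj mult.right_neutral)
  show "\<exists>B. B \<subseteq> Zlin \<and> finite B \<and> card B = d \<and>
      (\<forall>h\<in>Zlin. \<exists>w\<in>W. \<exists>c :: (complex fps \<Rightarrow> complex fps) \<Rightarrow> complex.
          h = (\<lambda>r. w r + (\<Sum>b\<in>B. fps_const (c b) * b r)))"
  proof (intro exI conjI ballI)
    show "F ` {..<d} \<subseteq> Zlin" using mult_Zlin by (auto simp: F_def)
    show "finite (F ` {..<d})" by simp
    show "card (F ` {..<d}) = d" using card_image[OF injF] by simp
    fix h assume h: "h \<in> Zlin"
    define c where "c = h 1"
    define q where "q = Abs_fps (\<lambda>i. c $ (i + d))"
    define p where "p = (\<Sum>i<d. fps_const (c $ i) * fps_X^i)"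
    have cpq: "c = p + fps_X^d * q"
    proof -
      have "p $ k = (if k < d then c $ k else 0)" for k
        by (simp add: p_def fps_sum_nth if_distrib cong: if_cong)
      then show ?thesis by (simp add: fps_eq_iff fps_X_power_mult_nth q_def)
    qed
    define cc where "cc = (\<lambda>b. c $ (inv_into {..<d} F b))"
    have "(\<Sum>b\<in>F ` {..<d}. fps_const (cc b) * b r) = (\<Sum>i<d. fps_const (cc (F i)) * F i r)" for r
      by (rule sum.reindex[OF injF, unfolded comp_def])
    also have "\<dots>r = p * r" for r
    proof -
      have "(\<Sum>i<d. fps_const (cc (F i)) * F i r) = (\<Sum>i<d. fps_const (c $ i) * F i r)"
        by (rule sum.cong) (auto simp: cc_def inv_into_f_f[OF injF])
      then show ?thesis by (simp add: F_def p_def sum_distrib_right mult.assoc)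
    qed
    finally have S: "\<And>r. (\<Sum>b\<in>F ` {..<d}. fps_const (cc b) * b r) = p * r" .
    have "\<exists>c. h = (\<lambda>r. fps_X^d * q * r + (\<Sum>b\<in>F ` {..<d}. fps_const (c b) * b r))"
    proof (rule exI[of _ cc], rule ext)
      fix r
      have "h r = r * c" unfolding c_def by (rule Zlin_eq[OF h])
      then have "h r = fps_X^d * q * r + p * r" by (simp add: cpq algebra_simps)
      then show "h r = fps_X^d * q * r + (\<Sum>b\<in>F ` {..<d}. fps_const (cc b) * b r)"
        by (simp only: S)
    qed
    moreover have "(\<lambda>r. fps_X^d * q * r) \<in> W" using W2 by blast
    ultimately show "\<exists>w\<in>W. \<exists>c. h = (\<lambda>r. w r + (\<Sum>b\<in>F ` {..<d}. fps_const (c b) * b r))"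
      by blast
  qed
next
  fix e assume "\<exists>B. B \<subseteq> Zlin \<and> finite B \<and> card B = e \<and>
      (\<forall>h\<in>Zlin. \<exists>w\<in>W. \<exists>c :: (complex fps \<Rightarrow> complex fps) \<Rightarrow> complex.
          h = (\<lambda>r. w r + (\<Sum>b\<in>B. fps_const (c b) * b r)))"
  then obtain B where B: "B \<subseteq> Zlin" "finite B" "card B = e"
    and sp: "\<forall>h\<in>Zlin. \<exists>w\<in>W. \<exists>c :: (complex fps \<Rightarrow> complex fps) \<Rightarrow> complex.
          h = (\<lambda>r. w r + (\<Sum>b\<in>B. fps_const (c b) * b r))" by blast
  define T where "T = (\<lambda>b. trunc d (b 1)) ` B"
  have "(\<lambda>i. fps_X^i :: complex fps) ` {..<d} \<subseteq> fv.span T"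
  proof
    fix x assume "x \<in> (\<lambda>i. fps_X^i :: complex fps) ` {..<d}"
    then obtain i where i: "i < d" "x = fps_X^i" by auto
    obtain w c where w: "w \<in> W" and eq: "(\<lambda>r. fps_X^i * r) = (\<lambda>r. w r + (\<Sum>b\<in>B. fps_const (c b) * b r))"
      using sp mult_Zlin by blast
    have "fps_X^i = w 1 + (\<Sum>b\<in>B. fps_const (c b) * b 1)" using fun_cong[OF eq, of 1] by simp
    then have "trunc d (fps_X^i) = trunc d (w 1) + (\<Sum>b\<in>B. fps_const (c b) * trunc d (b 1))"
      by (simp add: trunc_add trunc_sum[OF B(2)] trunc_scale)
    then have "x = (\<Sum>b\<in>B. fps_const (c b) * trunc d (b 1))"
      using i trunc_X trunc_dvd W1 w by simp
    also have "\<dots> \<in> fv.span T"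
      by (rule fv.span_sum, rule fv.span_scale, rule fv.span_base) (auto simp: T_def)
    finally show "x \<in> fv.span T" .
  qed
  from fv.independent_span_bound[OF _ indep_X this] B(2)
  have "card ((\<lambda>i. fps_X^i :: complex fps) ` {..<d}) \<le> card T" by (simp add: T_def)
  also have "card T \<le> e" using B(2,3) unfolding T_def by (metis card_image_le)
  finally show "d \<le> e"
    by (subst (asm) card_image) (auto intro: inj_onI X_pow_inj)
qed


definition cnt :: "nat set \<Rightarrow> nat \<Rightarrow> nat" where
  "cnt S a = card (S \<inter> {1..a})"

lemma cnt_0[simp]: "cnt S 0 = 0" by (simp add: cnt_def)

lemma cnt_Suc: "cnt S (Suc a) = cnt S a + (if Suc a \<in> S then 1 else 0)"
proof -
  have e: "S \<inter> {1..Suc a} = (if Suc a \<in> S then insert (Suc a) (S \<inter> {1..a}) else S \<inter> {1..a})"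
    by (auto simp: le_Suc_eq)
  show ?thesis unfolding cnt_def e by (simp add: card_insert_if)
qed

lemma cnt_full: "S \<subseteq> {1..n} \<Longrightarrow> cnt S n = card S"
  by (simp add: cnt_def Int_absorb2)

lemma cnt_le: "finite S \<Longrightarrow> cnt S a \<le> card S"
  by (simp add: cnt_def card_mono)

lemma hom_rel:
  assumes h: "h \<in> HomA n I J" and a: "a \<in> {1..n}"
  shows "xact I a * h (a mod n) 1 = xact J a * h (a - 1) 1 \<and>
         yact I a * h (a - 1) 1 = yact J a * h (a mod n) 1"
proof -
  have n: "a mod n < n" "a - 1 < n" using a by auto
  have Z: "h (a mod n) \<in> Zlin" "h (a - 1) \<in> Zlin" using h n unfolding HomA_def by auto
  have e1: "h (a mod n) (xact I a * 1) = xact J a * h (a - 1) 1"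
   and e2: "h (a - 1) (yact I a * 1) = yact J a * h (a mod n) 1"
    using h a unfolding HomA_def tgt_def src_def by blast+
  have "h (a mod n) (xact I a * 1) = xact I a * h (a mod n) 1"
    using Zlin_eq[OF Z(1), of "xact I a * 1"] by simp
  moreover have "h (a - 1) (yact I a * 1) = yact I a * h (a - 1) 1"
    using Zlin_eq[OF Z(2), of "yact I a * 1"] by simp
  ultimately show ?thesis using e1 e2 by simp
qed

lemma hom_chain:
  assumes h: "h \<in> HomA n I J"
  shows "a \<le> n \<Longrightarrow> h 0 1 * fps_X^(cnt (I-J) a) = h (a mod n) 1 * fps_X^(cnt (J-I) a)"
proof (induction a)
  case 0
  then show ?case by simp
next
  case (Suc b)
  have bn: "b < n" using Suc by simp
  then have bm: "b mod n = b" by simp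
  have IH: "h 0 1 * fps_X^(cnt (I-J) b) = h b 1 * fps_X^(cnt (J-I) b)"
    using Suc bm by simp
  have R: "xact I (Suc b) * h (Suc b mod n) 1 = xact J (Suc b) * h b 1"
      "yact I (Suc b) * h b 1 = yact J (Suc b) * h (Suc b mod n) 1"
    using hom_rel[OF h, of "Suc b"] bn by auto
  show ?case
  proof (cases "Suc b \<in> I"; cases "Suc b \<in> J")
    assume "Suc b \<in> I" "Suc b \<in> J"
    then show ?thesis using R IH by (simp add: cnt_Suc xact_def)
  next
    assume "Suc b \<in> I" "Suc b \<notin> J"
    then have "h (Suc b mod n) 1 = fps_X * h b 1" using R by (simp add: xact_def)
    then show ?thesis using IH \<open>Suc b \<in> I\<close> \<open>Suc b \<notin> J\<close>
      by (simp add: cnt_Suc)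
  next
    assume "Suc b \<notin> I" "Suc b \<in> J"
    then have "h b 1 = fps_X * h (Suc b mod n) 1" using R by (simp add: yact_def)
    then show ?thesis using IH \<open>Suc b \<notin> I\<close> \<open>Suc b \<in> J\<close>
      by (simp add: cnt_Suc)
  next
    assume "Suc b \<notin> I" "Suc b \<notin> J"
    then show ?thesis using R IH by (simp add: cnt_Suc yact_def)
  qed
qed

lemma image_W1:
  assumes n: "1 \<le> n" and wit: "\<exists>a\<le>n. cnt (J-I) a = d + cnt (I-J) a"
    and h: "h \<in> HomA n I J"
  shows "h 0 \<in> Zlin \<and> fps_X^d dvd h 0 1"
proof
  show "h 0 \<in> Zlin" using h n unfolding HomA_def by auto
  obtain a where a: "a \<le> n" "cnt (J-I) a = d + cnt (I-J) a" using wit by blast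
  have "h 0 1 * fps_X^(cnt (I-J) a) = (h (a mod n) 1 * fps_X^d) * fps_X^(cnt (I-J) a)"
    using hom_chain[OF h a(1)] a(2) by (simp add: power_add mult.assoc)
  then have "h 0 1 = h (a mod n) 1 * fps_X^d" by simp
  then show "fps_X^d dvd h 0 1" by simp
qed

lemma image_W2:
  assumes n: "1 \<le> n" and IJ: "I \<subseteq> {1..n}" "J \<subseteq> {1..n}"
    and cd: "card (I-J) = card (J-I)"
    and bd: "\<forall>a\<le>n. cnt (J-I) a \<le> d + cnt (I-J) a"
  shows "(\<lambda>r. fps_X^d * q * r) \<in> (\<lambda>h. h 0) ` HomA n I J"
proof -
  define E where "E a = d + cnt (I-J) a - cnt (J-I) a" for a
  define h where "h j r = fps_X^(E j) * q * r" for j r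
  have E0: "E 0 = d" by (simp add: E_def)
  have "I - J \<subseteq> {1..n}" "J - I \<subseteq> {1..n}" using IJ by auto
  then have En: "E n = d" using cd by (simp add: E_def cnt_full)
  have Emod: "E (a mod n) = E a" if "a \<in> {1..n}" for a
    using that E0 En by (cases "a = n") auto
  have step: "xact I (Suc b) * fps_X^(E (Suc b)) = xact J (Suc b) * fps_X^(E b) \<and>
      yact I (Suc b) * fps_X^(E b) = yact J (Suc b) * fps_X^(E (Suc b))" if b: "b < n" for b
  proof -
    have b1: "cnt (J-I) b \<le> d + cnt (I-J) b" "cnt (J-I) (Suc b) \<le> d + cnt (I-J) (Suc b)"
      using bd b by auto
    show ?thesis
    proof (cases "Suc b \<in> I"; cases "Suc b \<in> J")
      assume "Suc b \<in> I" "Suc b \<in> J"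
      then show ?thesis by (simp add: E_def cnt_Suc xact_def yact_def)
    next
      assume A: "Suc b \<in> I" "Suc b \<notin> J"
      then have "E (Suc b) = Suc (E b)" using b1 by (simp add: E_def cnt_Suc)
      then show ?thesis using A by (simp add: xact_def yact_def)
    next
      assume A: "Suc b \<notin> I" "Suc b \<in> J"
      then have "E b = Suc (E (Suc b))" using b1 by (simp add: E_def cnt_Suc)
      then show ?thesis using A by (simp add: xact_def yact_def mult.commute)
    next
      assume "Suc b \<notin> I" "Suc b \<notin> J"
      then show ?thesis by (simp add: E_def cnt_Suc xact_def yact_def)
    qed
  qed
  have "h \<in> HomA n I J"
    unfolding HomA_def
  proof (intro CollectI conjI allI impI ballI)
    fix j show "h j \<in> Zlin" unfolding h_def by (rule mult_Zlin)
  next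
    fix a r assume a: "a \<in> {1..n}"
    then obtain b where b: "a = Suc b" "b < n" by (cases a) auto
    have S: "xact I a * fps_X^(E a) = xact J a * fps_X^(E (a-1))"
         "yact I a * fps_X^(E (a-1)) = yact J a * fps_X^(E a)"
      using step[OF b(2)] b(1) by auto
    have "h (tgt n a) (xact I a * r) = (xact I a * fps_X^(E a)) * q * r"
      unfolding h_def tgt_def Emod[OF a] by (simp add: algebra_simps)
    also have "\<dots> = xact J a * h (src n a) r"
      unfolding S h_def src_def by (simp add: algebra_simps)
    finally show "h (tgt n a) (xact I a * r) = xact J a * h (src n a) r" .
    have "h (src n a) (yact I a * r) = (yact I a * fps_X^(E (a-1))) * q * r"
      unfolding h_def src_def by (simp add: algebra_simps)
    also have "\<dots> = yact J a * h (tgt n a) r"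
      unfolding S h_def tgt_def Emod[OF a] by (simp add: algebra_simps)
    finally show "h (src n a) (yact I a * r) = yact J a * h (tgt n a) r" .
  qed
  moreover have "h 0 = (\<lambda>r. fps_X^d * q * r)" using E0 by (simp add: h_def fun_eq_iff)
  ultimately show ?thesis by (metis image_eqI)
qed

lemma kappa_gen:
  assumes n: "1 \<le> n" and IJ: "I \<subseteq> {1..n}" "J \<subseteq> {1..n}"
    and cd: "card (I-J) = card (J-I)"
    and bd: "\<forall>a\<le>n. cnt (J-I) a \<le> d + cnt (I-J) a"
    and wit: "\<exists>a\<le>n. cnt (J-I) a = d + cnt (I-J) a"
  shows "kappa0 n I J = d"
  unfolding kappa0_def
  by (rule coker_dim_eq) (use image_W1[OF n wit] image_W2[OF n IJ cd bd] in auto)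


lemma cnt_all: "S \<subseteq> {1..a} \<Longrightarrow> cnt S a = card S"
  by (simp add: cnt_def Int_absorb2)
lemma cnt_none: "(\<forall>x\<in>S. a < x) \<Longrightarrow> cnt S a = 0"
  unfolding cnt_def by (subgoal_tac "S \<inter> {1..a} = {}") auto
lemma cnt_un: "finite A \<Longrightarrow> finite B \<Longrightarrow> A \<inter> B = {} \<Longrightarrow> cnt (A \<union> B) a = cnt A a + cnt B a"
  unfolding cnt_def by (subst card_Un_disjoint[symmetric]) (auto intro: arg_cong[where f=card])

theorem lemma6p4:
  fixes m n :: nat and I J J' J'' :: "nat set"
  assumes "1 \<le> m" and "m < n"
    and "I \<subseteq> {1..n}" and "card I = m"
    and "J \<subseteq> {1..n}" and "card J = m"
    and "J - I = J' \<union> J''" and "J' \<inter> J'' = {}"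
    and "\<forall>x\<in>J'. \<forall>y\<in>I - J. x < y"
    and "\<forall>x\<in>I - J. \<forall>y\<in>J''. x < y"
  shows "kappa0 n I J = card J' \<and> kappa0 n J I = card J''"
proof -
  note A = assms
  have n: "1 \<le> n" using A by simp
  have fI: "finite I" and fJ: "finite J" using A(3,5) finite_subset by blast+
  have KL: "card (I - J) = card (J - I)"
    using A(4,6) fI fJ by (simp add: card_Diff_subset_Int Int_commute)
  have fJ': "finite J'" and fJ'': "finite J''"
  proof -
    have "finite (J - I)" using fJ by simp
    then show "finite J'" "finite J''" unfolding A(7) by simp_all
  qed
  have fK: "finite (I - J)" using fI by simp
  have cardL: "card (J - I) = card J' + card J''" using A(7,8) fJ' fJ'' by (simp add: card_Un_disjoint)
  have cntL: "cnt (J - I) a = cnt J' a + cnt J'' a" for a using A(7,8) fJ' fJ'' by (simp add: cnt_un)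
  have Kpos: "\<forall>x\<in>I - J. 1 \<le> x" "\<forall>x\<in>I - J. x \<le> n" using A(3) by auto
  have J'pos: "\<forall>x\<in>J'. 1 \<le> x" using A(5,7) by auto
  have J''le: "\<forall>x\<in>J''. x \<le> n" using A(5,7) by auto
  show ?thesis
  proof (cases "I - J = {}")
    case True
    then have "card (J - I) = 0" using KL by (metis card.empty)
    then have "J - I = {}" using fJ by (simp only: card_eq_0_iff finite_Diff) simp
    then have e: "J' = {}" "J'' = {}" using A(7) by auto
    have "kappa0 n I J = 0"
      by (rule kappa_gen[OF n A(3) A(5) KL]) (use True \<open>J - I = {}\<close> in \<open>auto simp: cnt_def\<close>)
    moreover have "kappa0 n J I = 0"
      by (rule kappa_gen[OF n A(5) A(3) KL[symmetric]]) (use True \<open>J - I = {}\<close> in \<open>auto simp: cnt_def\<close>)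
    ultimately show ?thesis using e by simp
  next
    case False
    define k0 where "k0 = Min (I - J)"
    define k1 where "k1 = Max (I - J)"
    have k0: "k0 \<in> I - J" "\<forall>x\<in>I-J. k0 \<le> x" using Min_in[OF fK False] Min_le[OF fK] by (auto simp: k0_def)
    have k1: "k1 \<in> I - J" "\<forall>x\<in>I-J. x \<le> k1" using Max_in[OF fK False] Max_ge[OF fK] by (auto simp: k1_def)
    have k0n: "1 \<le> k0" "k0 \<le> n" using k0(1) Kpos by blast+
    have k1n: "1 \<le> k1" "k1 \<le> n" using k1(1) Kpos by blast+
    have "kappa0 n I J = card J'"
    proof (rule kappa_gen[OF n A(3) A(5) KL])
      show "\<forall>a\<le>n. cnt (J - I) a \<le> card J' + cnt (I - J) a"
      proof (intro allI impI)
        fix a assume "a \<le> n"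
        show "cnt (J - I) a \<le> card J' + cnt (I - J) a"
        proof (cases "\<forall>y\<in>J''. a < y")
          case True
          then show ?thesis using cntL[of a] cnt_none[OF True] cnt_le[OF fJ', of a] by simp
        next
          case F: False
          then obtain y where y: "y \<in> J''" "y \<le> a" by auto
          have "I - J \<subseteq> {1..a}"
          proof
            fix x assume "x \<in> I - J"
            then have "x < y" "1 \<le> x" using A(10) y(1) Kpos by auto
            then show "x \<in> {1..a}" using y(2) by simp
          qed
          then have "cnt (I - J) a = card (J - I)" using KL by (simp add: cnt_all)
          then show ?thesis using cnt_le[of "J - I" a] fJ by simp
        qed
      qed
      show "\<exists>a\<le>n. cnt (J - I) a = card J' + cnt (I - J) a"
      proof (intro exI conjI)
        show "k0 - 1 \<le> n" using k0n by simp
        have "\<forall>x\<in>I - J. k0 - 1 < x"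
        proof
          fix x assume "x \<in> I - J"
          then have "k0 \<le> x" using k0(2) by blast
          then show "k0 - 1 < x" using k0n by simp
        qed
        then have "cnt (I - J) (k0 - 1) = 0" by (rule cnt_none)
        moreover have "J' \<subseteq> {1..k0 - 1}"
        proof
          fix x assume "x \<in> J'"
          then have "x < k0" "1 \<le> x" using A(9) k0(1) J'pos by auto
          then show "x \<in> {1..k0 - 1}" by simp
        qed
        then have "cnt J' (k0 - 1) = card J'" by (rule cnt_all)
        moreover have "\<forall>y\<in>J''. k0 - 1 < y"
        proof
          fix y assume "y \<in> J''"
          then have "k0 < y" using A(10) k0(1) by blast
          then show "k0 - 1 < y" by simp
        qed
        then have "cnt J'' (k0 - 1) = 0" by (rule cnt_none)
        ultimately show "cnt (J - I) (k0 - 1) = card J' + cnt (I - J) (k0 - 1)" using cntL by simp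
      qed
    qed
    moreover have "kappa0 n J I = card J''"
    proof (rule kappa_gen[OF n A(5) A(3) KL[symmetric]])
      show "\<forall>a\<le>n. cnt (I - J) a \<le> card J'' + cnt (J - I) a"
      proof (intro allI impI)
        fix a assume "a \<le> n"
        show "cnt (I - J) a \<le> card J'' + cnt (J - I) a"
        proof (cases "\<forall>x\<in>I - J. a < x")
          case True
          then show ?thesis using cnt_none[OF True] by simp
        next
          case F: False
          then obtain x where x: "x \<in> I - J" "x \<le> a" by auto
          have "J' \<subseteq> {1..a}"
          proof
            fix z assume "z \<in> J'"
            then have "z < x" "1 \<le> z" using A(9) x(1) J'pos by auto
            then show "z \<in> {1..a}" using x(2) by simp
          qed
          then have "cnt J' a = card J'" by (simp add: cnt_all)
          then show ?thesis using cntL[of a] cnt_le[OF fK, of a] KL cardL by simp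
        qed
      qed
      show "\<exists>a\<le>n. cnt (I - J) a = card J'' + cnt (J - I) a"
      proof (intro exI conjI)
        show "k1 \<le> n" using k1n by simp
        have "I - J \<subseteq> {1..k1}" using k1(2) Kpos(1) by auto
        then have "cnt (I - J) k1 = card (I - J)" by (rule cnt_all)
        moreover have "J' \<subseteq> {1..k1}"
        proof
          fix x assume "x \<in> J'"
          then have "x < k1" "1 \<le> x" using A(9) k1(1) J'pos by auto
          then show "x \<in> {1..k1}" by simp
        qed
        then have "cnt J' k1 = card J'" by (rule cnt_all)
        moreover have "\<forall>y\<in>J''. k1 < y" using A(10) k1(1) by blast
        then have "cnt J'' k1 = 0" by (rule cnt_none)
        ultimately show "cnt (I - J) k1 = card J'' + cnt (J - I) k1" using cntL KL cardL by simp
      qed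
    qed
    ultimately show ?thesis by simp
  qed
qed

end
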